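(* Let $P^n_\omega$ be a non-trivially weighted edge-weighted path on $n$ vertices whose edge ideal $I(P^n_\omega)$ is integrally closed. Then $P^n_\omega$ has at most two edges with non-trivial weight.
   Context: $\mathbb{K}$ is a field, $S=\mathbb{K}[x_1,\dots,x_n]$. For a simple graph $G$ with weight function $\omega:E(G)\to\mathbb{Z}_{>0}$, $I(G_\omega)=(x_i^{\omega(e)}x_j^{\omega(e)}\mid e=\{x_i,x_j\}\in E(G))$. An edge $e$ has non-trivial weight if $\omega(e)\ge 2$; $G_\omega$ is non-trivially weighted if at least one edge has non-trivial weight. An ideal $I$ is integrally closed if it equals its integral closure $\overline{I}$ (the set of $f\in S$ satisfying an equation $f^k+c_1f^{k-1}+\cdots+c_k=0$ with $c_i\in I^i$). *)

theory Defs
  imports "HOL-Library.Poly_Mapping"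
begin

(* The ring S = K[x_1..x_n] is represented as the
  set of polynomials only involving the variables with index < n.*)

type_synonym 'a mpoly = "(nat \<Rightarrow>\<^sub>0 nat) \<Rightarrow>\<^sub>0 'a"

definition polyS :: "nat \<Rightarrow> 'a::field mpoly set" where
  "polyS n = {p. \<forall>m \<in> Poly_Mapping.keys p. Poly_Mapping.keys m \<subseteq> {..<n}}"

definition var_pow :: "nat \<Rightarrow> nat \<Rightarrow> 'a::field mpoly" where
  "var_pow i a = Poly_Mapping.single (Poly_Mapping.single i a) 1"

definition ideal_span :: "nat \<Rightarrow> 'a::field mpoly set \<Rightarrow> 'a mpoly set" where
  "ideal_span n G = {p. \<exists>F r. finite F \<and> F \<subseteq> G \<and> (\<forall>g\<in>F. r g \<in> polyS n)
                          \<and> p = (\<Sum>g\<in>F. r g * g)}"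

definition ideal_power :: "nat \<Rightarrow> 'a::field mpoly set \<Rightarrow> nat \<Rightarrow> 'a mpoly set" where
  "ideal_power n I k = ideal_span n {prod_list xs | xs. length xs = k \<and> set xs \<subseteq> I}"

definition integral_closure :: "nat \<Rightarrow> 'a::field mpoly set \<Rightarrow> 'a mpoly set" where
  "integral_closure n I = {f \<in> polyS n. \<exists>k\<ge>1. \<exists>c. (\<forall>i\<in>{1..k}. c i \<in> ideal_power n I i)
                            \<and> f ^ k + (\<Sum>i=1..k. c i * f ^ (k - i)) = 0}"

definition integrally_closed :: "nat \<Rightarrow> 'a::field mpoly set \<Rightarrow> bool" where
  "integrally_closed n I \<longleftrightarrow> integral_closure n I = I"

(* Path P^n on vertices x_0,...,x_(n-1) with edges e_i = {x_i, x_{i+1}}, i < n - 1;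
  weight of edge e_i is w i (a positive integer).  Edge ideal of the weighted path.*)
definition weighted_path_edge_ideal :: "nat \<Rightarrow> (nat \<Rightarrow> nat) \<Rightarrow> 'a::field mpoly set" where
  "weighted_path_edge_ideal n w =
     ideal_span n {var_pow i (w i) * var_pow (Suc i) (w i) | i. i < n - 1}"

end

theory Submission
  imports Defs
begin

definition Ew :: "nat \<Rightarrow> nat \<Rightarrow> (nat \<Rightarrow>\<^sub>0 nat)" where
  "Ew i a = Poly_Mapping.single i a + Poly_Mapping.single (Suc i) a"

lemma gen_eq: "var_pow i a * var_pow (Suc i) a = (Poly_Mapping.single (Ew i a) 1 :: 'a::field mpoly)"
  by (simp add: var_pow_def mult_single Ew_def)

definition divP :: "nat \<Rightarrow> (nat \<Rightarrow> nat) \<Rightarrow> 'a::field mpoly \<Rightarrow> bool" where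
  "divP n w p \<longleftrightarrow> (\<forall>m\<in>Poly_Mapping.keys p. \<exists>j<n-1. \<forall>v. Poly_Mapping.lookup (Ew j (w j)) v \<le> Poly_Mapping.lookup m v)"

lemma divP_zero: "divP n w 0"
  by (simp add: divP_def)

lemma divP_add: "divP n w p \<Longrightarrow> divP n w q \<Longrightarrow> divP n w (p + q)"
proof -
  assume p: "divP n w p" and q: "divP n w q"
  show ?thesis unfolding divP_def
  proof
    fix m assume "m \<in> Poly_Mapping.keys (p + q)"
    then have "m \<in> Poly_Mapping.keys p \<or> m \<in> Poly_Mapping.keys q"
      using keys_add[of p q] by (simp add: subset_iff)
    then show "\<exists>j<n-1. \<forall>v. Poly_Mapping.lookup (Ew j (w j)) v \<le> Poly_Mapping.lookup m v"
      using p q unfolding divP_def by (elim disjE) simp_all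
  qed
qed

lemma divP_mult_gen:
  assumes "j < n - 1"
  shows "divP n w (r * (Poly_Mapping.single (Ew j (w j)) 1 :: 'a::field mpoly))"
  unfolding divP_def
proof
  fix m assume "m \<in> Poly_Mapping.keys (r * (Poly_Mapping.single (Ew j (w j)) 1 :: 'a mpoly))"
  then have "m \<in> {a + b | a b. a \<in> Poly_Mapping.keys r \<and> b \<in> Poly_Mapping.keys (Poly_Mapping.single (Ew j (w j)) (1::'a))}"
    by (rule subsetD[OF keys_mult])
  then obtain a where "m = a + Ew j (w j)" by auto
  then show "\<exists>j<n-1. \<forall>v. Poly_Mapping.lookup (Ew j (w j)) v \<le> Poly_Mapping.lookup m v"
    using assms by (intro exI[of _ j] conjI allI) (simp_all add: lookup_add)
qed

lemma divP_sum: "finite F \<Longrightarrow> (\<forall>g\<in>F. divP n w (f g)) \<Longrightarrow> divP n w (sum f F)"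
  by (induction F rule: finite_induct) (auto simp: divP_zero divP_add)

lemma ideal_divP:
  assumes "p \<in> (weighted_path_edge_ideal n w :: 'a::field mpoly set)"
  shows "divP n w p"
proof -
  from assms have "\<exists>F r. finite F \<and> F \<subseteq> {var_pow i (w i) * var_pow (Suc i) (w i) | i. i < n - 1}
      \<and> (\<forall>g\<in>F. r g \<in> polyS n) \<and> p = (\<Sum>g\<in>F. r g * (g :: 'a mpoly))"
    unfolding weighted_path_edge_ideal_def ideal_span_def by (rule CollectD)
  then obtain F r where F0: "finite F \<and> F \<subseteq> {var_pow i (w i) * var_pow (Suc i) (w i) | i. i < n - 1}
      \<and> (\<forall>g\<in>F. r g \<in> polyS n) \<and> p = (\<Sum>g\<in>F. r g * (g :: 'a mpoly))"
    by (elim exE)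
  then have F: "finite F" "F \<subseteq> {var_pow i (w i) * var_pow (Suc i) (w i) | i. i < n - 1}"
      "p = (\<Sum>g\<in>F. r g * (g :: 'a mpoly))" by simp_all
  have "\<forall>g\<in>F. divP n w (r g * g)"
  proof
    fix g assume "g \<in> F"
    then obtain j where "j < n - 1" "g = var_pow j (w j) * var_pow (Suc j) (w j)" using F by blast
    then show "divP n w (r g * g)" using divP_mult_gen[of j n w "r g"] by (simp add: gen_eq)
  qed
  then show ?thesis unfolding F(3) by (rule divP_sum[OF F(1)])
qed

lemma one_polyS: "(1 :: 'a::field mpoly) \<in> polyS n"
  by (simp add: polyS_def)

lemma gen_in:
  assumes "j < n - 1"
  shows "(Poly_Mapping.single (Ew j (w j)) 1 :: 'a::field mpoly) \<in> weighted_path_edge_ideal n w"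
proof -
  let ?g = "var_pow j (w j) * var_pow (Suc j) (w j) :: 'a mpoly"
  have "?g \<in> weighted_path_edge_ideal n w"
    unfolding weighted_path_edge_ideal_def ideal_span_def
    apply (rule CollectI)
    apply (rule exI[of _ "{?g}"], rule exI[of _ "\<lambda>_. 1"])
    apply (intro conjI)
    subgoal by simp
    subgoal using assms by blast
    subgoal using one_polyS by simp
    subgoal by simp
    done
  then show ?thesis by (simp add: gen_eq)
qed

lemma witness:
  assumes pos: "\<forall>i < n - 1. w i \<ge> 1"
    and ik: "i < k" "k < n - 1" "k \<noteq> i + 2" and wi: "2 \<le> w i" and wk: "2 \<le> w k"
  shows "\<not> integrally_closed n (weighted_path_edge_ideal n w :: 'a::field mpoly set)"
proof
  assume cl: "integrally_closed n (weighted_path_edge_ideal n w :: 'a::field mpoly set)"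
  define I where "I = (weighted_path_edge_ideal n w :: 'a::field mpoly set)"
  define a where "a = w i"
  define b where "b = w k"
  define p where "p = (a + 1) div 2"
  define r where "r = (b + 1) div 2"
  define M where "M = Poly_Mapping.single i p + Poly_Mapping.single (Suc i) p
      + Poly_Mapping.single k r + Poly_Mapping.single (Suc k) r"
  define Mm where "Mm = Poly_Mapping.single i (2*p-a) + Poly_Mapping.single (Suc i) (2*p-a)
      + Poly_Mapping.single k (2*r-b) + Poly_Mapping.single (Suc k) (2*r-b)"
  define f where "f = (Poly_Mapping.single M 1 :: 'a mpoly)"
  define m where "m = (Poly_Mapping.single Mm 1 :: 'a mpoly)"
  define gi where "gi = (Poly_Mapping.single (Ew i a) 1 :: 'a mpoly)"
  define gk where "gk = (Poly_Mapping.single (Ew k b) 1 :: 'a mpoly)"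
  have pa: "2*p \<ge> a" "p < a" "p \<ge> 1" using wi unfolding p_def a_def by auto
  have rb: "2*r \<ge> b" "r < b" "r \<ge> 1" using wk unfolding r_def b_def by auto
  have giI: "gi \<in> I" unfolding gi_def I_def a_def using gen_in[of i n w] ik by simp
  have gkI: "gk \<in> I" unfolding gk_def I_def b_def using gen_in[of k n w] ik by simp
  have lM: "\<And>v. Poly_Mapping.lookup M v = (if v = i then p else 0) + (if v = Suc i then p else 0)
      + (if v = k then r else 0) + (if v = Suc k then r else 0)"
    by (simp add: M_def lookup_add lookup_single when_def)
  have lMm: "\<And>v. Poly_Mapping.lookup Mm v = (if v = i then 2*p-a else 0) + (if v = Suc i then 2*p-a else 0)
      + (if v = k then 2*r-b else 0) + (if v = Suc k then 2*r-b else 0)"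
    by (simp add: Mm_def lookup_add lookup_single when_def)
  have lEw: "\<And>v j c. Poly_Mapping.lookup (Ew j c) v = (if v = j then c else 0) + (if v = Suc j then c else 0)"
    by (simp add: Ew_def lookup_add lookup_single when_def)
  have MM: "M + M = Ew i a + Ew k b + Mm"
  proof (rule poly_mapping_eqI)
    fix v
    show "Poly_Mapping.lookup (M + M) v = Poly_Mapping.lookup (Ew i a + Ew k b + Mm) v"
      unfolding lookup_add lM lMm lEw
      using pa rb ik
      by (cases "v = i"; cases "v = Suc i"; cases "v = k"; cases "v = Suc k") simp_all
  qed
  have fsq: "f^2 = m * (gi * gk)"
    unfolding f_def m_def gi_def gk_def
    by (simp add: power2_eq_square mult_single MM add.commute)
  have M0: "\<forall>v. v \<ge> n \<longrightarrow> Poly_Mapping.lookup M v = 0" "\<forall>v. v \<ge> n \<longrightarrow> Poly_Mapping.lookup Mm v = 0"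
    using ik unfolding lM lMm by auto
  have kM: "Poly_Mapping.keys M \<subseteq> {..<n}" "Poly_Mapping.keys Mm \<subseteq> {..<n}"
    using M0 by (auto simp: in_keys_iff not_less[symmetric])
  have fS: "f \<in> polyS n" using kM unfolding f_def polyS_def by simp
  have mS: "- m \<in> polyS n" using kM unfolding m_def polyS_def by (simp add: single_uminus[symmetric])
  have c1: "0 \<in> ideal_power n I 1"
    unfolding ideal_power_def ideal_span_def by (rule CollectI, rule exI[of _ "{}"]) simp
  have c2: "- (f^2) \<in> ideal_power n I 2"
    unfolding ideal_power_def ideal_span_def
    apply (rule CollectI)
    apply (rule exI[of _ "{gi * gk}"], rule exI[of _ "\<lambda>_. - m"])
    apply (intro conjI)
    subgoal by simp
    subgoal
    proof -
      have "gi * gk = prod_list [gi, gk]" by simp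
      moreover have "length [gi, gk] = 2 \<and> set [gi, gk] \<subseteq> I" using giI gkI by simp
      ultimately show ?thesis by blast
    qed
    subgoal using mS by simp
    subgoal using fsq by simp
    done
  define c where "c = (\<lambda>j::nat. if j = 1 then 0 else - (f^2))"
  have cin: "\<forall>j\<in>{1..2}. c j \<in> ideal_power n I j"
  proof
    fix j :: nat assume "j \<in> {1..2}"
    then have "j = 1 \<or> j = 2" by auto
    then show "c j \<in> ideal_power n I j"
    proof
      assume "j = 1" then show ?thesis using c1 unfolding c_def by simp
    next
      assume "j = 2" then show ?thesis using c2 unfolding c_def by simp
    qed
  qed
  have "(\<Sum>j=1..2. c j * f ^ (2 - j)) = c 1 * f ^ 1 + c 2 * f ^ 0"
    by (simp add: numeral_2_eq_2)
  then have ceq: "f ^ 2 + (\<Sum>j=1..2. c j * f ^ (2 - j)) = 0"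
    unfolding c_def by simp
  have "f \<in> integral_closure n I"
    unfolding integral_closure_def
    apply (rule CollectI, rule conjI[OF fS])
    apply (rule exI[of _ 2], rule conjI, simp)
    apply (rule exI[of _ c], rule conjI[OF cin ceq])
    done
  then have "f \<in> I" using cl unfolding integrally_closed_def I_def by simp
  then have "divP n w f" using ideal_divP unfolding I_def by blast
  then obtain j where j: "j < n - 1" "\<forall>v. Poly_Mapping.lookup (Ew j (w j)) v \<le> Poly_Mapping.lookup M v"
    unfolding divP_def f_def by auto
  have wj: "w j \<ge> 1" using pos j by auto
  have lE: "\<And>v. Poly_Mapping.lookup (Ew j (w j)) v = (if v = j then w j else 0) + (if v = Suc j then w j else 0)"
    by (simp add: Ew_def lookup_add lookup_single when_def)
  have h1: "w j \<le> Poly_Mapping.lookup M j" using j(2)[rule_format, of j] by (simp add: lE)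
  have h2: "w j \<le> Poly_Mapping.lookup M (Suc j)" using j(2)[rule_format, of "Suc j"] by (simp add: lE)
  have jin: "j = i \<or> j = Suc i \<or> j = k \<or> j = Suc k"
  proof (rule ccontr)
    assume "\<not> ?thesis"
    then have "Poly_Mapping.lookup M j = 0" by (simp add: lM)
    then show False using h1 wj by simp
  qed
  show False
  proof -
    { assume "j = i"
      then have "w i \<le> p" using h1 ik by (simp add: lM)
      then have False using pa unfolding a_def by simp }
    moreover
    { assume "j = k"
      then have "w k \<le> r" using h2 ik by (simp add: lM)
      then have False using rb unfolding b_def by simp }
    moreover
    { assume "j = Suc i" "j \<noteq> k"
      then have "Poly_Mapping.lookup M (Suc j) = 0" using ik by (simp add: lM)
      then have False using h2 wj by simp }
    moreover
    { assume "j = Suc k"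
      then have "Poly_Mapping.lookup M (Suc j) = 0" using ik by (simp add: lM)
      then have False using h2 wj by simp }
    ultimately show False using jin by blast
  qed
qed

lemma three_elems:
  assumes "2 < card S"
  obtains a b c where "a \<in> S" "b \<in> S" "c \<in> S" "a \<noteq> b" "a \<noteq> c" "b \<noteq> c"
proof -
  have fS: "finite S" using assms card.infinite by fastforce
  have "S \<noteq> {}" using assms by auto
  then obtain a where a: "a \<in> S" by auto
  have c1: "card (S - {a}) = card S - 1" using a fS by simp
  then have "0 < card (S - {a})" using assms by simp
  then obtain b where b: "b \<in> S - {a}" by (auto simp: card_gt_0_iff)
  have "card (S - {a} - {b}) = card S - 2" using b c1 fS by simp
  then have "0 < card (S - {a} - {b})" using assms by simp
  then obtain c where c: "c \<in> S - {a} - {b}" by (auto simp: card_gt_0_iff)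
  show ?thesis using that a b c by blast
qed

lemma pair_ok:
  assumes "x \<in> S" "y \<in> S" "x < y" "y \<noteq> x + (2::nat)"
  shows "\<exists>x\<in>S. \<exists>y\<in>S. x < y \<and> y \<noteq> x + (2::nat)"
  using assms by blast

lemma key3:
  assumes "x \<in> S" "y \<in> S" "z \<in> S" "x < y" "y < (z::nat)"
  shows "\<exists>x\<in>S. \<exists>y\<in>S. x < y \<and> y \<noteq> x + (2::nat)"
proof (cases "y = x + 2")
  case True
  then have "z \<noteq> x + 2" "x < z" using assms by simp_all
  then show ?thesis using pair_ok[of x S z] assms by simp
next
  case False
  then show ?thesis using pair_ok[of x S y] assms by simp
qed

lemma three_pair:
  assumes "2 < card S"
  shows "\<exists>x\<in>S. \<exists>y\<in>S. x < y \<and> y \<noteq> x + (2::nat)"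
proof -
  obtain a b c where abc: "a \<in> S" "b \<in> S" "c \<in> S" "a \<noteq> b" "a \<noteq> c" "b \<noteq> c"
    using three_elems[OF assms(1)] by blast
  have "a < b \<and> b < c \<or> a < c \<and> c < b \<or> b < a \<and> a < c \<or> b < c \<and> c < a \<or> c < a \<and> a < b \<or> c < b \<and> b < a"
    using abc(4-6) by linarith
  then show ?thesis
  proof (elim disjE conjE)
  qed (use abc key3 in metis)+
qed

theorem corollary4p5:
  fixes n :: nat and w :: "nat \<Rightarrow> nat"
  assumes pos: "\<forall>i < n - 1. w i \<ge> 1"
    and nontriv: "\<exists>i < n - 1. w i \<ge> 2"
    and closed: "integrally_closed n (weighted_path_edge_ideal n w :: 'a::field mpoly set)"
  shows "card {i. i < n - 1 \<and> w i \<ge> 2} \<le> 2"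
proof (rule ccontr)
  assume "\<not> ?thesis"
  then have "2 < card {i. i < n - 1 \<and> w i \<ge> 2}" by simp
  then obtain x y where "x < y" "y \<noteq> x + 2" "x < n - 1" "y < n - 1" "w x \<ge> 2" "w y \<ge> 2"
    using three_pair[of "{i. i < n - 1 \<and> w i \<ge> 2}"] by auto
  then show False using witness[OF pos] closed by blast
qed

end
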